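(* For rooted trees $T_1$ and $T_2$, the quotient of the rooted tree $T_1+T_2$ satisfies $$q_{T_1+T_2}=\frac{q_{T_1}}{1-z\,q_{T_1}q_{T_2}}=\frac{z+1-z\,q_{T_2'}}{(z+1-z\,q_{T_1'})(z+1-z\,q_{T_2'})-z}.$$
   Context: For a tree $T$ on $n$ vertices with adjacency characteristic polynomial $\chi_T$, its reciprocal polynomial is $R_T(z)=z^{n/2}\chi_T(\sqrt z+1/\sqrt z)$. A rooted tree is a tree with a distinguished vertex $r$ (its root). For a rooted tree $T$, $T'$ denotes the rooted forest $T-\{r\}$, the root of each component being the vertex adjacent to $r$ in $T$. The quotient of a rooted tree $T$ is the rational function $q_T=\prod_iR_{T_i}(z)/R_T(z)$, where the $T_i$ are the trees of $T'$ (empty product $=1$); the quotient of a rooted forest is the sum of the quotients of its trees (so the quotient of the empty forest is $0$). For rooted trees $T_1,T_2$, the rooted tree $T_1+T_2$ is obtained by joining the roots of $T_1$ and $T_2$ by an edge, its root being the root of $T_1$. *)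

theory Defs
  imports "Jordan_Normal_Form.Char_Poly" "HOL-Library.List_Lexorder"
    "HOL-Computational_Algebra.Fraction_Field"
begin

text \<open>Rooted trees: a root with an ordered list of rooted subtrees (the components
  of T - {r}, each rooted at the neighbour of r).\<close>
datatype rtree = Node "rtree list"

fun children :: "rtree \<Rightarrow> rtree list" where
  "children (Node ts) = ts"

text \<open>Vertices are addressed by paths from the root; the root is the empty path.\<close>
function verts :: "rtree \<Rightarrow> nat list set" where
  "verts (Node ts) = insert [] (\<Union>i\<in>{..<length ts}. (Cons i) ` verts (ts ! i))"
  by pat_completeness auto
termination
proof (relation "measure size")
  show "wf (measure size)" by simp
next
  fix ts :: "rtree list" and x assume "x \<in> {..<length ts}"
  then have "ts ! x \<in> set ts" by simp
  then have "size (ts ! x) \<le> size_list size ts" by (rule size_list_estimation') simp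
  then show "(ts ! x, Node ts) \<in> measure size" by simp
qed

definition adj :: "rtree \<Rightarrow> nat list \<Rightarrow> nat list \<Rightarrow> bool" where
  "adj T p q \<longleftrightarrow> p \<in> verts T \<and> q \<in> verts T \<and> (\<exists>i. q = p @ [i] \<or> p = q @ [i])"

definition vlist :: "rtree \<Rightarrow> nat list list" where
  "vlist T = sorted_list_of_set (verts T)"

definition nverts :: "rtree \<Rightarrow> nat" where
  "nverts T = card (verts T)"

definition adj_mat :: "rtree \<Rightarrow> real mat" where
  "adj_mat T = mat (length (vlist T)) (length (vlist T))
     (\<lambda>(i,j). if adj T (vlist T ! i) (vlist T ! j) then 1 else 0)"

definition chi :: "rtree \<Rightarrow> real poly" where
  "chi T = char_poly (adj_mat T)"

text \<open>Reciprocal polynomial R_T(z) = z^(n/2) chi_T(sqrt z + 1/sqrt z)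
  (a polynomial in z, determined by its values for z > 0).\<close>
definition recip :: "rtree \<Rightarrow> real poly" where
  "recip T = (THE p. \<forall>z::real. z > 0 \<longrightarrow>
      poly p z = z powr (real (nverts T) / 2) * poly (chi T) (sqrt z + 1 / sqrt z))"

text \<open>Rational functions in z: the fraction field of real polynomials.\<close>
definition Z :: "real poly fract" where
  "Z = Fract [:0, 1:] 1"

definition tquot :: "rtree \<Rightarrow> real poly fract" where
  "tquot T = Fract (prod_list (map recip (children T))) (recip T)"

definition fquot :: "rtree list \<Rightarrow> real poly fract" where
  "fquot F = sum_list (map tquot F)"

text \<open>T1 + T2: join the roots by an edge, root of T1 is the root.\<close>
definition tjoin :: "rtree \<Rightarrow> rtree \<Rightarrow> rtree" where
  "tjoin T1 T2 = Node (children T1 @ [T2])"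

end

theory Submission
  imports Defs
begin

definition Ebar :: "nat \<Rightarrow> nat \<Rightarrow> real poly mat" where
  "Ebar a b = mat a b (\<lambda>(i,j). if i = 0 \<and> j = 0 then -1 else 0)"

definition rr :: "'a mat \<Rightarrow> nat \<Rightarrow> (nat \<Rightarrow> 'a) \<Rightarrow> 'a mat" where
  "rr N k f = mat (dim_row N) (dim_col N) (\<lambda>(i,j). if i = k then f j else N $$ (i,j))"

lemma det_rr_add:
  fixes N :: "'a :: comm_ring_1 mat"
  assumes N: "N \<in> carrier_mat n n" and k: "k < n" and fg: "\<And>j. j < n \<Longrightarrow> N $$ (k,j) = f j + g j"
  shows "det N = det (rr N k f) + det (rr N k g)"
proof -
  have e: "mat\<^sub>r n n (\<lambda>i. if i = k then vec n h else row N i) = rr N k h" for h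
    by (rule eq_matI) (use N in \<open>auto simp: rr_def\<close>)
  have e2: "mat\<^sub>r n n (\<lambda>i. if i = k then (\<lambda>_. vec n f) i + (\<lambda>_. vec n g) i else row N i) = N"
    by (rule eq_matI) (use N fg in \<open>auto\<close>)
  have "det(mat\<^sub>r n n (\<lambda> i. if i = k then (\<lambda>_. vec n f) i + (\<lambda>_. vec n g) i else row N i)) =
    det(mat\<^sub>r n n (\<lambda> i. if i = k then (\<lambda>_. vec n f) i else row N i)) +
    det(mat\<^sub>r n n (\<lambda> i. if i = k then (\<lambda>_. vec n g) i else row N i))"
    by (rule det_row_add) (use N k in auto)
  then show ?thesis unfolding e2 e by simp
qed

lemma laplace_single:
  fixes M :: "'a :: comm_ring_1 mat"
  assumes M: "M \<in> carrier_mat n n" and i: "i < n" and j: "j < n"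
    and z: "\<And>l. l < n \<Longrightarrow> l \<noteq> j \<Longrightarrow> M $$ (i,l) = 0"
  shows "det M = M $$ (i,j) * cofactor M i j"
proof -
  have "det M = (\<Sum>l<n. M $$ (i,l) * cofactor M i l)" by (rule laplace_expansion_row[OF M i])
  also have "\<dots> = (\<Sum>l<n. if l = j then M $$ (i,j) * cofactor M i j else 0)"
    by (rule sum.cong) (use z in auto)
  also have "\<dots> = M $$ (i,j) * cofactor M i j" using j by simp
  finally show ?thesis .
qed

lemma det_join:
  fixes A B :: "real poly mat"
  assumes A: "A \<in> carrier_mat n1 n1" and B: "B \<in> carrier_mat n2 n2" and n1: "n1 > 0" and n2: "n2 > 0"
  shows "det (four_block_mat A (Ebar n1 n2) (Ebar n2 n1) B) =
    det A * det B - det (mat_delete A 0 0) * det (mat_delete B 0 0)"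
proof -
  let ?n = "n1 + n2"
  define N where "N = four_block_mat A (Ebar n1 n2) (Ebar n2 n1) B"
  have N: "N \<in> carrier_mat ?n ?n" unfolding N_def using A B by (auto simp: Ebar_def)
  have Nij: "N $$ (i,j) = (if i < n1 then if j < n1 then A $$ (i,j) else (if i = 0 \<and> j = n1 then -1 else 0)
      else if j < n1 then (if i = n1 \<and> j = 0 then -1 else 0) else B $$ (i - n1, j - n1))"
    if "i < ?n" "j < ?n" for i j
    unfolding N_def using that A B by (subst index_mat_four_block) (auto simp: Ebar_def)
  define Na where "Na = rr N 0 (\<lambda>j. if j = n1 then 0 else N $$ (0,j))"
  define Nb where "Nb = rr N 0 (\<lambda>j. if j = n1 then -1 else 0)"
  have s1: "det N = det Na + det Nb" unfolding Na_def Nb_def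
    by (rule det_rr_add[OF N]) (use n1 Nij in auto)
  have "Na = four_block_mat A (0\<^sub>m n1 n2) (Ebar n2 n1) B"
    by (rule eq_matI) (use A B N n1 in \<open>auto simp: Na_def rr_def Nij Ebar_def\<close>)
  then have da: "det Na = det A * det B"
    using det_four_block_mat_upper_right_zero[OF A refl _ B, of "Ebar n2 n1"] by (simp add: Ebar_def)
  have Nb: "Nb \<in> carrier_mat ?n ?n" using N unfolding Nb_def rr_def by auto
  have Nbij: "Nb $$ (i,j) = (if i = 0 then (if j = n1 then -1 else 0) else N $$ (i,j))"
    if "i < ?n" "j < ?n" for i j using that N by (auto simp: Nb_def rr_def)
  define Nba where "Nba = rr Nb n1 (\<lambda>j. if j = 0 then 0 else Nb $$ (n1,j))"
  define Nbb where "Nbb = rr Nb n1 (\<lambda>j. if j = 0 then -1 else 0)"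
  have s2: "det Nb = det Nba + det Nbb" unfolding Nba_def Nbb_def
    by (rule det_rr_add[OF Nb]) (use n1 n2 Nij Nbij in auto)
  define A0 where "A0 = mat n1 n1 (\<lambda>(i,j). if i = 0 then 0 else A $$ (i,j))"
  have A0: "A0 \<in> carrier_mat n1 n1" unfolding A0_def by simp
  have "Nba = four_block_mat A0 (Ebar n1 n2) (0\<^sub>m n2 n1) B"
    by (rule eq_matI) (use A B N Nb n1 in \<open>auto simp: Nba_def A0_def rr_def Nij Nbij Ebar_def\<close>)
  then have "det Nba = det A0 * det B"
    using det_four_block_mat_lower_left_zero[OF A0 _ refl B, of "Ebar n1 n2"] by (simp add: Ebar_def)
  moreover have "det A0 = A0 $$ (0,0) * cofactor A0 0 0"
    by (rule laplace_single[OF A0 n1 n1]) (simp add: A0_def)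
  then have "det A0 = 0" using n1 by (simp add: A0_def)
  ultimately have dba: "det Nba = 0" by simp
  have Nbb: "Nbb \<in> carrier_mat ?n ?n" using Nb unfolding Nbb_def rr_def by auto
  have Nbbij: "Nbb $$ (i,j) = (if i = 0 then (if j = n1 then -1 else 0) else
       if i = n1 then (if j = 0 then -1 else 0) else N $$ (i,j))"
    if "i < ?n" "j < ?n" for i j using that Nb n1 by (auto simp: Nbb_def rr_def Nbij)
  define M where "M = mat_delete Nbb 0 n1"
  have M: "M \<in> carrier_mat (?n - 1) (?n - 1)" unfolding M_def using mat_delete_carrier[OF Nbb] .
  have d1: "det Nbb = - ((-1)^n1 * det M)"
    using laplace_single[OF Nbb _ _ , of 0 n1] n1 n2 Nbbij
    by (simp add: cofactor_def M_def)
  have Mij: "M $$ (i,j) = Nbb $$ (Suc i, if j < n1 then j else Suc j)" if "i < ?n - 1" "j < ?n - 1" for i j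
    using that Nbb by (simp add: M_def mat_delete_def)
  define K where "K = mat_delete M (n1 - 1) 0"
  have d2: "det M = - ((-1)^(n1 - 1) * det K)"
    using laplace_single[OF M _ _ , of "n1 - 1" 0] n1 n2 Mij Nbbij
    by (simp add: cofactor_def K_def)
  have "K = four_block_mat (mat_delete A 0 0) (0\<^sub>m (n1 - 1) (n2 - 1)) (0\<^sub>m (n2 - 1) (n1 - 1)) (mat_delete B 0 0)"
  proof (rule eq_matI)
    show "dim_row K = dim_row (four_block_mat (mat_delete A 0 0) (0\<^sub>m (n1 - 1) (n2 - 1)) (0\<^sub>m (n2 - 1) (n1 - 1)) (mat_delete B 0 0))"
      "dim_col K = dim_col (four_block_mat (mat_delete A 0 0) (0\<^sub>m (n1 - 1) (n2 - 1)) (0\<^sub>m (n2 - 1) (n1 - 1)) (mat_delete B 0 0))"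
      unfolding K_def using M A B n1 n2 by auto
    fix i j assume "i < dim_row (four_block_mat (mat_delete A 0 0) (0\<^sub>m (n1 - 1) (n2 - 1)) (0\<^sub>m (n2 - 1) (n1 - 1)) (mat_delete B 0 0))"
      "j < dim_col (four_block_mat (mat_delete A 0 0) (0\<^sub>m (n1 - 1) (n2 - 1)) (0\<^sub>m (n2 - 1) (n1 - 1)) (mat_delete B 0 0))"
    then have i: "i < n1 - 1 + (n2 - 1)" and j: "j < n1 - 1 + (n2 - 1)" using A B by auto
    have "K $$ (i,j) = M $$ (if i < n1 - 1 then i else Suc i, Suc j)"
      using i j M n1 n2 by (simp add: K_def mat_delete_def)
    also have "\<dots> = Nbb $$ (Suc (if i < n1 - 1 then i else Suc i), if Suc j < n1 then Suc j else Suc (Suc j))"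
      using i j n1 n2 by (subst Mij) auto
    also have "\<dots> = four_block_mat (mat_delete A 0 0) (0\<^sub>m (n1 - 1) (n2 - 1)) (0\<^sub>m (n2 - 1) (n1 - 1)) (mat_delete B 0 0) $$ (i,j)"
    proof -
      define r where "r = Suc (if i < n1 - 1 then i else Suc i)"
      define c where "c = (if Suc j < n1 then Suc j else Suc (Suc j))"
      have r: "r < ?n" "r \<noteq> 0" "r \<noteq> n1" and c: "c < ?n" "c \<noteq> 0" "c \<noteq> n1"
        using i j n1 n2 by (auto simp: r_def c_def)
      have "Nbb $$ (r, c) = N $$ (r, c)" using Nbbij[OF r(1) c(1)] r c by simp
      also have "\<dots> = (if r < n1 then if c < n1 then A $$ (r,c) else 0
        else if c < n1 then 0 else B $$ (r - n1, c - n1))" using Nij[OF r(1) c(1)] r c by simp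
      also have "\<dots> = four_block_mat (mat_delete A 0 0) (0\<^sub>m (n1 - 1) (n2 - 1)) (0\<^sub>m (n2 - 1) (n1 - 1)) (mat_delete B 0 0) $$ (i,j)"
        using i j n1 n2 A B by (auto simp: mat_delete_def r_def c_def Suc_diff_le)
      finally show ?thesis unfolding r_def c_def .
    qed
    finally show "K $$ (i,j) = four_block_mat (mat_delete A 0 0) (0\<^sub>m (n1 - 1) (n2 - 1)) (0\<^sub>m (n2 - 1) (n1 - 1)) (mat_delete B 0 0) $$ (i,j)" .
  qed
  then have d3: "det K = det (mat_delete A 0 0) * det (mat_delete B 0 0)"
    using det_four_block_mat_upper_right_zero[OF mat_delete_carrier[OF A] refl _ mat_delete_carrier[OF B]]
    by simp
  obtain m where m: "n1 = Suc m" using n1 by (cases n1) auto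
  have "det Nbb = - (det (mat_delete A 0 0) * det (mat_delete B 0 0))"
    unfolding d1 d2 d3 m by simp
  then show ?thesis using s1 s2 da dba unfolding N_def by simp
qed


lemma verts_finite: "finite (verts T)"
  by (induction T rule: verts.induct) auto

lemma Nil_verts[simp]: "[] \<in> verts T"
  by (cases T) auto

lemma verts_Nil_node: "verts (Node []) = {[]}"
  by simp

lemma verts_snoc: "verts (Node (ts @ [S])) = verts (Node ts) \<union> Cons (length ts) ` verts S"
proof -
  have "(\<Union>x<Suc (length ts). (#) x ` verts ((ts @ [S]) ! x)) =
     (\<Union>x<length ts. (#) x ` verts (ts ! x)) \<union> (#) (length ts) ` verts S"
    by (auto simp: lessThan_Suc nth_append)
  then show ?thesis by (simp only: verts.simps length_append_singleton) auto
qed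

lemma verts_node_cases: "p \<in> verts (Node ts) \<Longrightarrow> p = [] \<or> (\<exists>i p'. p = i # p' \<and> i < length ts)"
  by auto

lemma vlist_props: "sorted_wrt (<) (vlist T)" "set (vlist T) = verts T" "distinct (vlist T)"
  "length (vlist T) = nverts T"
  unfolding vlist_def nverts_def using verts_finite[of T]
  by (auto simp: strict_sorted_list_of_set distinct_card)

lemma vlist_Nil: "vlist (Node []) = [[]]"
  unfolding vlist_def by simp

lemma vlist_snoc: "vlist (Node (ts @ [S])) = vlist (Node ts) @ map (Cons (length ts)) (vlist S)"
proof -
  let ?l = "vlist (Node ts) @ map (Cons (length ts)) (vlist S)"
  have fin: "finite (verts (Node (ts @ [S])))" by (rule verts_finite)
  have s: "sorted_wrt (<) ?l"
    unfolding sorted_wrt_append sorted_wrt_map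
  proof (intro conjI ballI)
    show "sorted_wrt (<) (vlist (Node ts))" by (rule vlist_props)
    show "sorted_wrt (\<lambda>x y. length ts # x < length ts # y) (vlist S)"
      using vlist_props(1)[of S] by (simp add: sorted_wrt_mono_rel)
    fix x y assume "x \<in> set (vlist (Node ts))" "y \<in> set (map (Cons (length ts)) (vlist S))"
    then show "x < y" using verts_node_cases[of x ts] by (auto simp: vlist_props)
  qed
  have st: "set ?l = verts (Node (ts @ [S]))" unfolding verts_snoc by (simp add: vlist_props del: verts.simps)
  have d: "distinct ?l" using s by (rule strict_sorted_iff[THEN iffD1, THEN conjunct2]) 
  have "length ?l = card (verts (Node (ts @ [S])))"
    using distinct_card[OF d] st by simp
  then have "sorted_list_of_set (verts (Node (ts @ [S]))) = ?l"
    using s st by (intro sorted_list_of_set_unique[OF fin, THEN iffD1]) blast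
  then show ?thesis unfolding vlist_def[of "Node (ts @ [S])"] .
qed

lemma vlist_0: "vlist T ! 0 = []" "vlist T \<noteq> []"
proof -
  have "[] \<in> set (vlist T)" by (simp add: vlist_props)
  then obtain k where k: "k < length (vlist T)" "vlist T ! k = []" by (auto simp: in_set_conv_nth)
  show "vlist T \<noteq> []" using k by auto
  show "vlist T ! 0 = []"
  proof (rule ccontr)
    assume "vlist T ! 0 \<noteq> []"
    have "k \<noteq> 0"
    proof
      assume "k = 0"
      then show False using k \<open>vlist T ! 0 \<noteq> []\<close> by simp
    qed
    then have "0 < k" by simp
    then have "vlist T ! 0 < vlist T ! k" using vlist_props(1)[of T, unfolded sorted_wrt_iff_nth_less] k
      by blast
    then show False using k by simp
  qed
qed

lemma vlist_nth_Nil: "i < length (vlist T) \<Longrightarrow> (vlist T ! i = []) = (i = 0)"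
  using nth_eq_iff_index_eq[OF vlist_props(3)[of T], of i 0] vlist_0[of T]
  by (metis length_greater_0_conv)

lemma nverts_pos: "nverts T > 0"
  using vlist_0(2)[of T] vlist_props(4)[of T] by (metis length_greater_0_conv)

lemma adj_irrefl: "\<not> adj T p p"
  unfolding adj_def by auto

lemma adj_snoc1: "p \<in> verts (Node ts) \<Longrightarrow> q \<in> verts (Node ts) \<Longrightarrow>
   adj (Node (ts @ [S])) p q = adj (Node ts) p q"
  unfolding adj_def verts_snoc by auto

lemma adj_snoc2: "p \<in> verts S \<Longrightarrow> q \<in> verts S \<Longrightarrow>
   adj (Node (ts @ [S])) (length ts # p) (length ts # q) = adj S p q"
  unfolding adj_def verts_snoc by auto

lemma adj_snoc3: assumes "p \<in> verts (Node ts)" "q \<in> verts S"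
  shows "adj (Node (ts @ [S])) p (length ts # q) = (p = [] \<and> q = [])"
    "adj (Node (ts @ [S])) (length ts # q) p = (p = [] \<and> q = [])"
proof -
  have c: "p = [] \<or> (\<exists>i p'. p = i # p' \<and> i < length ts)" using verts_node_cases[OF assms(1)] .
  have "(\<exists>i. length ts # q = p @ [i] \<or> p = (length ts # q) @ [i]) = (p = [] \<and> q = [])"
    using c by (cases p) auto
  then show "adj (Node (ts @ [S])) p (length ts # q) = (p = [] \<and> q = [])"
    "adj (Node (ts @ [S])) (length ts # q) p = (p = [] \<and> q = [])"
    unfolding adj_def verts_snoc using assms by auto
qed

definition cpm :: "rtree \<Rightarrow> real poly mat" where
  "cpm T = char_poly_matrix (adj_mat T)"

lemma adj_mat_carrier: "adj_mat T \<in> carrier_mat (nverts T) (nverts T)"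
  unfolding adj_mat_def by (simp add: vlist_props)

lemma cpm_carrier: "cpm T \<in> carrier_mat (nverts T) (nverts T)"
  unfolding cpm_def using adj_mat_carrier by simp

lemma cpm_index: "i < nverts T \<Longrightarrow> j < nverts T \<Longrightarrow> cpm T $$ (i,j) =
   (if i = j then [:0,1:] else 0) - (if adj T (vlist T ! i) (vlist T ! j) then 1 else 0)"
  unfolding cpm_def char_poly_matrix_def adj_mat_def
  by (auto simp: vlist_props)

lemma nverts_snoc: "nverts (Node (ts @ [S])) = nverts (Node ts) + nverts S"
  using arg_cong[OF vlist_snoc, of length, of ts S] by (simp add: vlist_props)

lemma cpm_snoc: "cpm (Node (ts @ [S])) = four_block_mat (cpm (Node ts))
   (Ebar (nverts (Node ts)) (nverts S)) (Ebar (nverts S) (nverts (Node ts))) (cpm S)"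
  (is "?L = ?R")
proof -
  let ?n1 = "nverts (Node ts)" and ?n2 = "nverts S" and ?T = "Node (ts @ [S])"
  have dL: "?L \<in> carrier_mat (?n1 + ?n2) (?n1 + ?n2)" using cpm_carrier[of ?T] nverts_snoc by simp
  have dR: "?R \<in> carrier_mat (?n1 + ?n2) (?n1 + ?n2)"
    using cpm_carrier[of "Node ts"] cpm_carrier[of S] by (auto simp: Ebar_def)
  have vl: "vlist ?T ! i = (if i < ?n1 then vlist (Node ts) ! i else length ts # (vlist S ! (i - ?n1)))"
    if "i < ?n1 + ?n2" for i
    using that by (auto simp: vlist_snoc nth_append vlist_props)
  have inv1: "i < ?n1 \<Longrightarrow> vlist (Node ts) ! i \<in> verts (Node ts)" for i
    by (metis nth_mem vlist_props(2) vlist_props(4))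
  have inv2: "i < ?n2 \<Longrightarrow> vlist S ! i \<in> verts S" for i
    by (metis nth_mem vlist_props(2) vlist_props(4))
  show ?thesis
  proof (rule eq_matI)
    show "dim_row ?L = dim_row ?R" "dim_col ?L = dim_col ?R" using dL dR by auto
    fix i j assume i: "i < dim_row ?R" and j: "j < dim_col ?R"
    then have i': "i < ?n1 + ?n2" and j': "j < ?n1 + ?n2" using dR by auto
    have L: "?L $$ (i,j) = (if i = j then [:0,1:] else 0) - (if adj ?T (vlist ?T ! i) (vlist ?T ! j) then 1 else 0)"
      using cpm_index[of i ?T j] i' j' nverts_snoc by simp
    have R: "?R $$ (i,j) = (if i < ?n1 then if j < ?n1 then cpm (Node ts) $$ (i,j) else Ebar ?n1 ?n2 $$ (i, j - ?n1)
       else if j < ?n1 then Ebar ?n2 ?n1 $$ (i - ?n1, j) else cpm S $$ (i - ?n1, j - ?n1))"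
      using i' j' cpm_carrier[of "Node ts"] cpm_carrier[of S]
      by (subst index_mat_four_block) auto
    show "?L $$ (i,j) = ?R $$ (i,j)"
    proof (cases "i < ?n1"; cases "j < ?n1")
      assume a: "i < ?n1" "j < ?n1"
      show ?thesis unfolding L R using a i' j' inv1[of i] inv1[of j]
        by (simp add: vl adj_snoc1 cpm_index)
    next
      assume a: "i < ?n1" "\<not> j < ?n1"
      show ?thesis unfolding L R using a i' j' inv1[of i] inv2[of "j - ?n1"]
        by (auto simp add: vl adj_snoc3 Ebar_def vlist_nth_Nil vlist_props)
    next
      assume a: "\<not> i < ?n1" "j < ?n1"
      show ?thesis unfolding L R using a i' j' inv1[of j] inv2[of "i - ?n1"]
        by (auto simp add: vl adj_snoc3 Ebar_def vlist_nth_Nil vlist_props)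
    next
      assume a: "\<not> i < ?n1" "\<not> j < ?n1"
      show ?thesis unfolding L R using a i' j' inv2[of "i - ?n1"] inv2[of "j - ?n1"]
        by (auto simp add: vl adj_snoc2 cpm_index)
    qed
  qed
qed

definition cf :: "rtree \<Rightarrow> real poly" where
  "cf T = det (mat_delete (cpm T) 0 0)"

lemma chi_cpm: "chi T = det (cpm T)"
  unfolding chi_def cpm_def char_poly_def ..

lemma nverts_Nil: "nverts (Node []) = 1"
  unfolding vlist_props(4)[symmetric] vlist_Nil by simp

lemma chi_Nil: "chi (Node []) = [:0,1:]"
proof -
  have c: "cpm (Node []) \<in> carrier_mat 1 1" using cpm_carrier[of "Node []"] nverts_Nil by simp
  have "chi (Node []) = cpm (Node []) $$ (0,0)" unfolding chi_cpm by (rule det_single[OF c])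
  also have "\<dots> = [:0,1:]" using cpm_index[of 0 "Node []" 0] nverts_Nil adj_irrefl by simp
  finally show ?thesis .
qed

lemma cf_Nil: "cf (Node []) = 1"
proof -
  have c: "mat_delete (cpm (Node [])) 0 0 \<in> carrier_mat 0 0"
    using mat_delete_carrier[OF cpm_carrier[of "Node []"]] nverts_Nil by simp
  show ?thesis unfolding cf_def using det_dim_zero[OF c] .
qed

lemma chi_snoc: "chi (Node (ts @ [S])) = chi (Node ts) * chi S - cf (Node ts) * cf S"
  unfolding chi_cpm cf_def cpm_snoc
  by (rule det_join[OF cpm_carrier cpm_carrier nverts_pos nverts_pos])

lemma cf_snoc: "cf (Node (ts @ [S])) = cf (Node ts) * chi S"
proof -
  let ?n1 = "nverts (Node ts)" and ?n2 = "nverts S"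
  have A: "cpm (Node ts) \<in> carrier_mat ?n1 ?n1" and B: "cpm S \<in> carrier_mat ?n2 ?n2"
    by (rule cpm_carrier)+
  have n1: "?n1 > 0" by (rule nverts_pos)
  have "mat_delete (cpm (Node (ts @ [S]))) 0 0 = four_block_mat (mat_delete (cpm (Node ts)) 0 0)
     (0\<^sub>m (?n1 - 1) ?n2) (0\<^sub>m ?n2 (?n1 - 1)) (cpm S)"
  proof (rule eq_matI)
    fix i j assume "i < dim_row (four_block_mat (mat_delete (cpm (Node ts)) 0 0)
     (0\<^sub>m (?n1 - 1) ?n2) (0\<^sub>m ?n2 (?n1 - 1)) (cpm S))"
     "j < dim_col (four_block_mat (mat_delete (cpm (Node ts)) 0 0)
     (0\<^sub>m (?n1 - 1) ?n2) (0\<^sub>m ?n2 (?n1 - 1)) (cpm S))"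
    then have i: "i < ?n1 - 1 + ?n2" and j: "j < ?n1 - 1 + ?n2" using A B by auto
    show "mat_delete (cpm (Node (ts @ [S]))) 0 0 $$ (i,j) = four_block_mat (mat_delete (cpm (Node ts)) 0 0)
     (0\<^sub>m (?n1 - 1) ?n2) (0\<^sub>m ?n2 (?n1 - 1)) (cpm S) $$ (i,j)"
      unfolding cpm_snoc using i j A B n1
      by (auto simp: mat_delete_def Ebar_def Suc_diff_le)
  qed (use A B n1 in \<open>auto simp: cpm_snoc\<close>)
  then show ?thesis unfolding cf_def chi_cpm
    using det_four_block_mat_upper_right_zero[OF mat_delete_carrier[OF A] refl _ B] by simp
qed

lemma cf_prod: "cf (Node ts) = prod_list (map chi ts)"
  by (induction ts rule: rev_induct) (auto simp: cf_Nil cf_snoc)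

lemma nverts_Node: "nverts (Node ts) = 1 + sum_list (map nverts ts)"
  by (induction ts rule: rev_induct) (auto simp: nverts_Nil nverts_snoc)

lemma chi_nonzero: "chi T \<noteq> 0"
proof -
  have "degree (chi T) = nverts T \<and> coeff (chi T) (nverts T) = 1"
    unfolding chi_def by (rule degree_monic_char_poly[OF adj_mat_carrier])
  then show ?thesis by auto
qed

definition good :: "rtree \<Rightarrow> real poly \<Rightarrow> bool" where
  "good T r \<longleftrightarrow> (\<forall>s::real. s > 0 \<longrightarrow> poly r (s^2) = s ^ nverts T * poly (chi T) (s + 1 / s))"

definition goodF :: "rtree list \<Rightarrow> real poly \<Rightarrow> bool" where
  "goodF ts f \<longleftrightarrow> (\<forall>s::real. s > 0 \<longrightarrow>
     poly f (s^2) = s ^ sum_list (map nverts ts) * poly (prod_list (map chi ts)) (s + 1 / s))"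

lemma poly_eq_pos: fixes p q :: "real poly"
  assumes "\<And>z. z > 0 \<Longrightarrow> poly p z = poly q z" shows "p = q"
proof (rule ccontr)
  assume "p \<noteq> q"
  then have "p - q \<noteq> 0" by simp
  then have "finite {z. poly (p - q) z = 0}" by (rule poly_roots_finite)
  moreover have "{0<..} \<subseteq> {z. poly (p - q) z = 0}" using assms by auto
  ultimately have "finite {0::real<..}" by (rule finite_subset[rotated])
  then show False using infinite_Ioi by blast
qed

lemma recip_eq: assumes "good T r" shows "recip T = r"
proof -
  have P: "poly r z = z powr (real (nverts T) / 2) * poly (chi T) (sqrt z + 1 / sqrt z)" if "z > 0" for z
  proof -
    have "z = (sqrt z)^2" using that by simp
    moreover have "z powr (real (nverts T) / 2) = sqrt z ^ nverts T"
    proof -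
      have "sqrt z ^ nverts T = (z powr (1/2)) ^ nverts T" using that by (simp add: powr_half_sqrt)
      also have "\<dots> = (z powr (1/2)) powr (real (nverts T))" using that by (simp add: powr_realpow)
      also have "\<dots> = z powr (real (nverts T) / 2)" by (simp add: powr_powr)
      finally show ?thesis by simp
    qed
    ultimately show ?thesis using assms that unfolding good_def
      by (metis real_sqrt_gt_0_iff)
  qed
  show ?thesis unfolding recip_def
  proof (rule the_equality)
    show "\<forall>z>0. poly r z = z powr (real (nverts T) / 2) * poly (chi T) (sqrt z + 1 / sqrt z)"
      using P by blast
    fix p assume "\<forall>z>0. poly p z = z powr (real (nverts T) / 2) * poly (chi T) (sqrt z + 1 / sqrt z)"
    then show "p = r" using P by (intro poly_eq_pos) auto
  qed
qed

lemma goodF_Nil: "goodF [] 1" unfolding goodF_def by simp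

lemma goodF_snoc: "goodF ts f \<Longrightarrow> good S r \<Longrightarrow> goodF (ts @ [S]) (f * r)"
  unfolding goodF_def good_def by (simp add: power_add)

lemma good_Nil: "good (Node []) [:1,1:]"
  unfolding good_def by (simp add: nverts_Nil chi_Nil power2_eq_square field_simps)

lemma good_snoc:
  assumes "good (Node ts) r1" "goodF ts f1" "good S r2" "goodF (children S) f2"
  shows "good (Node (ts @ [S])) (r1 * r2 - [:0,1:] * f1 * f2)"
  unfolding good_def
proof (intro allI impI)
  fix s :: real assume s: "s > 0"
  obtain ss where S: "S = Node ss" by (cases S)
  define a where "a = sum_list (map nverts ts)"
  define b where "b = sum_list (map nverts ss)"
  have n1: "nverts (Node ts) = Suc a" and n2: "nverts S = Suc b"
    unfolding a_def b_def S nverts_Node by simp_all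
  have e1: "poly r1 (s^2) = s ^ Suc a * poly (chi (Node ts)) (s + 1/s)"
    using assms(1) s n1 unfolding good_def by simp
  have e2: "poly r2 (s^2) = s ^ Suc b * poly (chi S) (s + 1/s)"
    using assms(3) s n2 unfolding good_def by simp
  have e3: "poly f1 (s^2) = s ^ a * poly (cf (Node ts)) (s + 1/s)"
    using assms(2) s unfolding goodF_def a_def cf_prod by simp
  have e4: "poly f2 (s^2) = s ^ b * poly (cf S) (s + 1/s)"
    using assms(4) s unfolding goodF_def b_def S cf_prod by simp
  show "poly (r1 * r2 - [:0, 1:] * f1 * f2) (s\<^sup>2) =
         s ^ nverts (Node (ts @ [S])) * poly (chi (Node (ts @ [S]))) (s + 1 / s)"
    unfolding nverts_snoc chi_snoc n1 n2 using e1 e2 e3 e4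
    by (simp add: algebra_simps power2_eq_square power_add)
qed

lemma ex_good: "(\<exists>r. good T r) \<and> (\<exists>f. goodF (children T) f)"
proof (induction T)
  case (Node ts)
  have "\<forall>t\<in>set ts'. (\<exists>r. good t r) \<and> (\<exists>f. goodF (children t) f) \<Longrightarrow>
     (\<exists>r. good (Node ts') r) \<and> (\<exists>f. goodF ts' f)" for ts'
  proof (induction ts' rule: rev_induct)
    case Nil
    then show ?case using good_Nil goodF_Nil by blast
  next
    case (snoc S ts')
    then obtain r1 f1 r2 f2 where "good (Node ts') r1" "goodF ts' f1" "good S r2" "goodF (children S) f2"
      by auto
    then show ?case using good_snoc goodF_snoc by blast
  qed
  then show ?case using Node by simp
qed

lemma recip_good: "good T (recip T)"
  using ex_good[of T] recip_eq by blast

lemma recip_goodF: "goodF ts (prod_list (map recip ts))"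
  by (induction ts rule: rev_induct) (auto simp: goodF_Nil goodF_snoc recip_good)

lemma recip_Nil: "recip (Node []) = [:1,1:]"
  by (rule recip_eq[OF good_Nil])

lemma recip_snoc: "recip (Node (ts @ [S])) = recip (Node ts) * recip S
   - [:0,1:] * prod_list (map recip ts) * prod_list (map recip (children S))"
  by (rule recip_eq[OF good_snoc[OF recip_good recip_goodF recip_good recip_goodF]])

lemma g_mono: fixes x y :: real assumes "1 \<le> x" "x < y" shows "x + 1/x < y + 1/y"
proof -
  have xy: "1 < x * y" using assms by (metis less_1_mult less_le_trans mult_cancel_right1 mult_le_cancel_left1 not_one_le_zero order_le_less zero_le_one)
  have "1/x - 1/y = (y - x) / (x * y)" using assms by (simp add: field_simps)
  also have "\<dots> < y - x" using xy assms by (simp add: divide_less_eq)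
  finally show ?thesis by simp
qed

lemma recip_nonzero: "recip T \<noteq> 0"
proof
  assume r0: "recip T = 0"
  define g where "g = (\<lambda>k::nat. real k + 1 / real k)"
  have roots: "g ` {1..} \<subseteq> {x. poly (chi T) x = 0}"
  proof
    fix x assume "x \<in> g ` {1..}"
    then obtain k where k: "k \<ge> 1" "x = g k" by auto
    have "poly (recip T) ((real k)^2) = real k ^ nverts T * poly (chi T) (real k + 1 / real k)"
      using recip_good[of T] k unfolding good_def by simp
    then show "x \<in> {x. poly (chi T) x = 0}" using r0 k by (simp add: g_def)
  qed
  have "inj_on g {1..}"
  proof (rule inj_onI)
    fix k l :: nat assume "k \<in> {1..}" "l \<in> {1..}" "g k = g l"
    then have h: "k \<ge> 1" "l \<ge> 1" "g k = g l" by auto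
    show "k = l"
    proof (rule ccontr)
      assume "k \<noteq> l"
      then have "k < l \<or> l < k" by arith
      then show False
      proof
        assume "k < l"
        then show False using g_mono[of "real k" "real l"] h by (simp add: g_def)
      next
        assume "l < k"
        then show False using g_mono[of "real l" "real k"] h by (simp add: g_def)
      qed
    qed
  qed
  moreover have "finite (g ` {1..})"
    using roots finite_subset poly_roots_finite[OF chi_nonzero] by blast
  ultimately have "finite {1::nat..}" using finite_imageD by blast
  then show False using infinite_Ici by blast
qed

lemma recip_img[simp]: "0 \<notin> recip ` A"
  by (metis imageE recip_nonzero)

lemma prod_recip_nonzero: "prod_list (map recip ts) \<noteq> 0"
  by (simp add: prod_list_zero_iff)

definition emb :: "real poly \<Rightarrow> real poly fract" where "emb p = Fract p 1"

lemma Fract_emb: "Fract a b = emb a / emb b" unfolding emb_def by simp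
lemma emb_mult: "emb (a * b) = emb a * emb b" unfolding emb_def by simp
lemma emb_diff: "emb (a - b) = emb a - emb b" unfolding emb_def by simp
lemma emb_add: "emb (a + b) = emb a + emb b" unfolding emb_def by simp
lemma emb_1: "emb 1 = 1" unfolding emb_def One_fract_def ..
lemma emb_eq0: "emb a = 0 \<longleftrightarrow> a = 0" unfolding emb_def Zero_fract_def by (simp add: eq_fract)
lemma Z_emb: "Z = emb [:0,1:]" unfolding Z_def emb_def ..

lemma tquot_emb: "tquot T = emb (prod_list (map recip (children T))) / emb (recip T)"
  unfolding tquot_def Fract_emb ..

lemma quot_rel: "Z + 1 - Z * fquot ts = emb (recip (Node ts)) / emb (prod_list (map recip ts))"
proof (induction ts rule: rev_induct)
  case Nil
  have "[:1,1:] = [:0,1:] + (1::real poly)" by (simp add: one_pCons)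
  then show ?case by (simp add: fquot_def recip_Nil emb_1 Z_emb emb_add)
next
  case (snoc S ts)
  have f: "fquot (ts @ [S]) = fquot ts + tquot S" unfolding fquot_def by simp
  have nz: "emb (prod_list (map recip ts)) \<noteq> 0" "emb (recip S) \<noteq> 0"
    by (simp_all add: emb_eq0 prod_recip_nonzero recip_nonzero)
  have "Z + 1 - Z * fquot (ts @ [S]) = (Z + 1 - Z * fquot ts) - Z * tquot S"
    unfolding f by (simp add: algebra_simps)
  also have "\<dots> = emb (recip (Node (ts @ [S]))) / emb (prod_list (map recip (ts @ [S])))"
    unfolding snoc tquot_emb recip_snoc emb_diff emb_mult Z_emb[symmetric]
    using nz by (simp add: field_simps emb_mult)
  finally show ?case .
qed

theorem lemma15:
  fixes T1 T2 :: rtree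
  shows "tquot (tjoin T1 T2) = tquot T1 / (1 - Z * tquot T1 * tquot T2)
    \<and> tquot (tjoin T1 T2) =
        (Z + 1 - Z * fquot (children T2)) /
        ((Z + 1 - Z * fquot (children T1)) * (Z + 1 - Z * fquot (children T2)) - Z)"
proof -
  obtain c1 where T1: "T1 = Node c1" by (cases T1)
  obtain c2 where T2: "T2 = Node c2" by (cases T2)
  define r1 where "r1 = emb (recip T1)"
  define r2 where "r2 = emb (recip T2)"
  define p1 where "p1 = emb (prod_list (map recip c1))"
  define p2 where "p2 = emb (prod_list (map recip c2))"
  have nz: "r1 \<noteq> 0" "r2 \<noteq> 0" "p1 \<noteq> 0" "p2 \<noteq> 0"
    unfolding r1_def r2_def p1_def p2_def by (simp_all add: emb_eq0 prod_recip_nonzero recip_nonzero)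
  have d: "r1 * r2 - Z * p1 * p2 \<noteq> 0"
    using recip_nonzero[of "Node (c1 @ [T2])"]
    unfolding r1_def r2_def p1_def p2_def T1 recip_snoc Z_emb emb_mult[symmetric] emb_diff[symmetric] emb_eq0
    by (simp add: T2 algebra_simps)
  have q: "tquot (tjoin T1 T2) = p1 * r2 / (r1 * r2 - Z * p1 * p2)"
    unfolding tjoin_def tquot_emb r1_def r2_def p1_def p2_def T1 recip_snoc Z_emb emb_mult[symmetric] emb_diff[symmetric]
    by (simp add: T2 algebra_simps)
  have q1: "tquot T1 = p1 / r1" unfolding tquot_emb p1_def r1_def T1 by simp
  have q2: "tquot T2 = p2 / r2" unfolding tquot_emb p2_def r2_def T2 by simp
  have f1: "Z + 1 - Z * fquot (children T1) = r1 / p1" unfolding quot_rel r1_def p1_def T1 by simp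
  have f2: "Z + 1 - Z * fquot (children T2) = r2 / p2" unfolding quot_rel r2_def p2_def T2 by simp
  show ?thesis unfolding q q1 q2 f1 f2 using nz d by (simp add: field_simps)
qed

end
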